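(* Let $w>1$ be a fixed-precision binary number represented by $n$ bits, of which the first $m$ correspond to its integer part, and let $b\geq \max\{2m,4\}$. Consider the following algorithm (SQRT), in which every iterate is computed exactly in fixed precision arithmetic and then truncated to $b$ bits after the decimal point before being passed to the next step: if $w=1$ return $1$; otherwise set $\hat{x}_0 = 2^{-p}$, where $p\in\mathbb{N}$ is such that $2^p > w \geq 2^{p-1}$, set $s=\lceil \log_2 b\rceil$, and for $i=1,\dots,s$ compute $x_i = -w\hat{x}_{i-1}^2 + 2\hat{x}_{i-1}$ and let $\hat{x}_i$ be $x_i$ truncated (so $\hat{x}_s\approx 1/w$); then set $\hat{y}_0 = 2^{\lfloor (q-1)/2\rfloor}$, where $q\in\mathbb{N}$ is such that $2^{1-q} > \hat{x}_s \geq 2^{-q}$, and for $j=1,\dots,s$ compute $y_j = \frac{1}{2}(3\hat{y}_{j-1} - \hat{x}_s\hat{y}_{j-1}^3)$ and let $\hat{y}_j$ be $y_j$ truncated; return $\hat{y}_s$. Then the returned value $\hat{y}_s$ approximates $\sqrt{w}$ with error \begin{equation*} |\hat{y}_{s}-\sqrt{w}| \leq \left( \frac{3}{4} \right)^{b-2m} \left( 2+ b + \log_2 b \right). \end{equation*}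
   Context: Numbers are held in fixed precision: an $n$-bit register holding $w=\sum_{j=m-n}^{m-1} w^{(j)}2^j$, with $m$ bits for the integer part and $n-m$ bits for the fractional part. The first stage is Newton's iteration applied to $f_1(x)=\frac{1}{x}-w$ (approximating $1/w$), and the second stage is Newton's iteration applied to $f_2(y)=\frac{1}{y^2}-\hat{x}_s$ (approximating $1/\sqrt{\hat{x}_s}\approx\sqrt{w}$); each step uses only addition and multiplication. *)

theory Defs
  imports "HOL-Analysis.Analysis"
begin

definition trunc_bits :: "nat \<Rightarrow> real \<Rightarrow> real" where
  "trunc_bits b x = sgn x * (real_of_int \<lfloor>\<bar>x\<bar> * 2 ^ b\<rfloor> / 2 ^ b)"

definition fixed_val :: "nat \<Rightarrow> nat \<Rightarrow> (int \<Rightarrow> bool) \<Rightarrow> real" where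
  "fixed_val n m wb = (\<Sum>j\<in>{int m - int n .. int m - 1}. (if wb j then 1 else 0) * 2 powi j)"

fun sqrt_x :: "nat \<Rightarrow> real \<Rightarrow> nat \<Rightarrow> real" where
  "sqrt_x b w 0 = 2 powi (- int (THE p::nat. 2 ^ p > w \<and> w \<ge> 2 powi (int p - 1)))"
| "sqrt_x b w (Suc i) = trunc_bits b (- w * (sqrt_x b w i)^2 + 2 * sqrt_x b w i)"

text \<open>Second stage: Newton iteration for 1/sqrt(xs), with xs = hat x_s.\<close>
fun sqrt_y :: "nat \<Rightarrow> real \<Rightarrow> nat \<Rightarrow> real" where
  "sqrt_y b xs 0 = 2 powi ((int (THE q::nat. 2 powi (1 - int q) > xs \<and> xs \<ge> 2 powi (- int q)) - 1) div 2)"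
| "sqrt_y b xs (Suc j) = trunc_bits b ((3 * sqrt_y b xs j - xs * (sqrt_y b xs j)^3) / 2)"

definition sqrt_steps :: "nat \<Rightarrow> nat" where
  "sqrt_steps b = nat \<lceil>log 2 (real b)\<rceil>"

definition SQRT :: "nat \<Rightarrow> real \<Rightarrow> real" where
  "SQRT b w = (if w = 1 then 1 else
     (let s = sqrt_steps b in sqrt_y b (sqrt_x b w s) s))"

end

theory Submission
  imports Defs
begin


lemma trunc_bounds:
  assumes "x \<ge> 0"
  shows "x - 1/2^b < trunc_bits b x \<and> trunc_bits b x \<le> x \<and> 0 \<le> trunc_bits b x"
proof (cases "x = 0")
  case True then show ?thesis by (simp add: trunc_bits_def)
next
  case False
  hence xp: "x > 0" using assms by simp
  have t: "trunc_bits b x = real_of_int \<lfloor>x * 2 ^ b\<rfloor> / 2 ^ b" using xp by (simp add: trunc_bits_def)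
  have f1: "real_of_int \<lfloor>x * 2 ^ b\<rfloor> \<le> x * 2^b" by simp
  have f2: "x * 2^b - 1 < real_of_int \<lfloor>x * 2 ^ b\<rfloor>" by linarith
  have f3: "0 \<le> \<lfloor>x * 2 ^ b\<rfloor>" using xp by simp
  have p: "(0::real) < 2^b" by simp
  have g1: "real_of_int \<lfloor>x * 2 ^ b\<rfloor> / 2 ^ b \<le> x" using f1 p by (simp add: divide_le_eq)
  have g2: "x - 1/2^b < real_of_int \<lfloor>x * 2 ^ b\<rfloor> / 2 ^ b"
  proof -
    have "x - 1/2^b = (x * 2^b - 1) / 2^b" using p by (simp add: field_simps)
    also have "\<dots> < real_of_int \<lfloor>x * 2 ^ b\<rfloor> / 2 ^ b" using f2 p by (simp add: divide_strict_right_mono)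
    finally show ?thesis .
  qed
  show ?thesis unfolding t using g1 g2 f3 p by simp
qed

lemma pow2_bracket:
  fixes z :: real assumes "z > 0"
  shows "\<exists>k::int. 2 powi k \<le> z \<and> z < 2 powi (k+1)"
proof -
  define k where "k = \<lfloor>log 2 z\<rfloor>"
  have "2 powi k = 2 powr (real_of_int k)" by (simp add: powr_real_of_int')
  also have "\<dots> \<le> 2 powr (log 2 z)" unfolding k_def by (intro powr_mono) auto
  also have "\<dots> = z" using assms by simp
  finally have a: "2 powi k \<le> z" .
  have "z = 2 powr (log 2 z)" using assms by simp
  also have "\<dots> < 2 powr (real_of_int (k+1))" unfolding k_def by (intro powr_less_mono) linarith+
  also have "\<dots> = 2 powi (k+1)" by (rule powr_real_of_int') auto
  finally show ?thesis using a by blast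
qed

lemma pow2_bracket_unique:
  fixes z :: real
  assumes "2 powi k \<le> z" "z < 2 powi (k+1)" "2 powi k' \<le> z" "z < 2 powi (k'+1)"
  shows "k = k'"
proof (rule ccontr)
  assume "k \<noteq> k'"
  then consider "k + 1 \<le> k'" | "k' + 1 \<le> k" by linarith
  then show False
  proof cases
    case 1
    have "2 powi (k+1) \<le> (2::real) powi k'" by (rule power_int_increasing[OF 1]) auto
    then show False using assms by linarith
  next
    case 2
    have "2 powi (k'+1) \<le> (2::real) powi k" by (rule power_int_increasing[OF 2]) auto
    then show False using assms by linarith
  qed
qed



lemma x_step:
  fixes w x a D :: real
  assumes w: "w > 0" and eps: "w / 2^b \<le> 1/4"
    and e0: "0 \<le> 1 - w*x" "1 - w*x \<le> 1/2"
    and eb: "1 - w*x \<le> a + D" and a: "0 \<le> a" "a \<le> 1/2" and D: "D \<ge> 0"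
  shows "0 \<le> 1 - w * trunc_bits b (- w * x^2 + 2*x) \<and> 1 - w * trunc_bits b (- w * x^2 + 2*x) \<le> 1/2
     \<and> 1 - w * trunc_bits b (- w * x^2 + 2*x) \<le> a^2 + D + w/2^b"
proof -
  define e where "e = 1 - w*x"
  have xe_eq: "- w * x^2 + 2*x = x * (1 + e)" unfolding e_def by (simp add: power2_eq_square algebra_simps)
  have x0: "x \<ge> 0"
  proof -
    have "w * x \<ge> 0" using e0 by simp
    thus ?thesis using w by (simp add: zero_le_mult_iff)
  qed
  have xe0: "- w * x^2 + 2*x \<ge> 0" unfolding xe_eq using x0 e0 e_def by simp
  define x' where "x' = trunc_bits b (- w * x^2 + 2*x)"
  define d where "d = (- w * x^2 + 2*x) - x'"
  have dd: "0 \<le> d" "d < 1/2^b" using trunc_bounds[OF xe0, of b] unfolding d_def x'_def by auto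
  have e': "1 - w * x' = e^2 + w * d"
    unfolding d_def e_def by (simp add: power2_eq_square algebra_simps)
  have wd: "w * d \<le> w / 2^b" using dd w by (simp add: less_imp_le mult_left_mono divide_inverse)
  have wd0: "w * d \<ge> 0" using dd w by simp
  have ee: "e^2 \<le> 1/4" using e0 unfolding e_def[symmetric] by (simp add: power2_eq_square mult_mono[of e "1/2" e "1/2", simplified])
  have e_ge: "0 \<le> e" using e0 e_def by simp
  have sq: "e^2 \<le> a^2 + D"
  proof -
    have "e^2 = e * e" by (simp add: power2_eq_square)
    also have "\<dots> \<le> e * (a + D)" using e_ge eb e_def by (simp add: mult_left_mono)
    also have "\<dots> = e*a + e*D" by (simp add: algebra_simps)
    also have "\<dots> \<le> (a+D)*a + (1/2)*D" using e_ge eb e_def e0 a D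
      by (intro add_mono mult_right_mono) auto
    also have "\<dots> \<le> a^2 + D"
    proof -
      have "D*a \<le> D*(1/2)" using a D by (intro mult_left_mono) auto
      thus ?thesis by (simp add: power2_eq_square algebra_simps)
    qed
    finally show ?thesis .
  qed
  have wd4: "w*d \<le> 1/4" using wd eps by linarith
  show ?thesis unfolding x'_def[symmetric] e' using ee sq wd wd0 wd4 e_ge
    by (auto intro: add_nonneg_nonneg)
qed

lemma x_stage:
  fixes w :: real and b :: nat
  assumes w: "w > 0" and eps: "w / 2^b \<le> 1/4"
   and e0: "0 \<le> 1 - w * sqrt_x b w 0" "1 - w * sqrt_x b w 0 \<le> 1/2"
  shows "0 \<le> 1 - w * sqrt_x b w i \<and> 1 - w * sqrt_x b w i \<le> 1/2 \<and>
         1 - w * sqrt_x b w i \<le> (1/2)^(2^i) + real i * (w/2^b)"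
proof (induction i)
  case 0 then show ?case using e0 by simp
next
  case (Suc i)
  have a: "0 \<le> ((1::real)/2)^(2^i)" "((1::real)/2)^(2^i) \<le> 1/2"
  proof -
    show "0 \<le> ((1::real)/2)^(2^i)" by simp
    have "((1::real)/2)^(2^i) \<le> (1/2)^1" by (rule power_decreasing) auto
    then show "((1::real)/2)^(2^i) \<le> 1/2" by simp
  qed
  have "(((1::real)/2)^(2^i))^2 = (1/2)^(2^Suc i)" by (simp add: power_mult[symmetric] mult.commute)
  from x_step[OF w eps _ _ _ a, of "sqrt_x b w i" "real i * (w/2^b)"] Suc.IH this w
  show ?case by (simp add: algebra_simps add_divide_distrib)
qed



lemma y_step:
  fixes X y c D \<eta> :: real
  assumes X: "X > 0" and y: "0 \<le> y"
    and u0: "0 \<le> 1 - X*y^2" "1 - X*y^2 \<le> 3/4"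
    and ub: "1 - X*y^2 \<le> c + D" and c: "0 \<le> c" "c \<le> 3/4" and D: "D \<ge> 0"
    and eta: "2 * sqrt X / 2^b \<le> \<eta>" "\<eta> \<le> 1/8"
  shows "0 \<le> trunc_bits b ((3*y - X*y^3)/2) \<and>
     0 \<le> 1 - X * (trunc_bits b ((3*y - X*y^3)/2))^2 \<and>
     1 - X * (trunc_bits b ((3*y - X*y^3)/2))^2 \<le> 3/4 \<and>
     1 - X * (trunc_bits b ((3*y - X*y^3)/2))^2 \<le> c^2 + 3/2 * D + \<eta>"
proof -
  define u where "u = 1 - X*y^2"
  define ye where "ye = (3*y - X*y^3)/2"
  have ye_eq: "ye = y * (2 + u) / 2" unfolding ye_def u_def by (simp add: power2_eq_square power3_eq_cube algebra_simps)
  have ye0: "ye \<ge> 0" unfolding ye_eq using y u0 u_def by simp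
  have ue: "1 - X * ye^2 = u^2 * (3 + u) / 4"
  proof -
    have "X*y^2 = 1 - u" unfolding u_def by simp
    hence "X * ye^2 = (X*y^2) * (2+u)^2/4" unfolding ye_eq by (simp add: power2_eq_square)
    also have "\<dots> = (1-u) * (2+u)^2/4" using \<open>X*y^2 = 1 - u\<close> by simp
    finally have "X * ye^2 = (1-u) * (2+u)^2/4" .
    thus ?thesis by (simp add: power2_eq_square algebra_simps)
  qed
  define y' where "y' = trunc_bits b ye"
  define d where "d = ye - y'"
  have tb: "ye - 1/2^b < y'" "y' \<le> ye" "0 \<le> y'" using trunc_bounds[OF ye0, of b] unfolding y'_def by auto
  have dd: "0 \<le> d" "d < 1/2^b" "d \<le> ye" using tb unfolding d_def by auto
  have "1 - X*y'^2 = (1 - X*ye^2) + X*d*(2*ye-d)" unfolding d_def by (simp add: power2_eq_square algebra_simps)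
  hence u': "1 - X*y'^2 = u^2*(3+u)/4 + X*d*(2*ye - d)" using ue by simp
  have u_ge: "0 \<le> u" "u \<le> 3/4" using u0 u_def by auto
  have uecub: "u^2*(3+u)/4 \<le> u^2" using u_ge by (simp add: power2_eq_square mult_left_mono[of "3+u" 4 "u*u"])
  have uecub0: "0 \<le> u^2*(3+u)/4" using u_ge by simp
  have pos: "0 \<le> X*d*(2*ye - d)" using X dd by simp
  have Xye: "X*ye \<le> sqrt X"
  proof -
    have "X * ye^2 \<le> 1" using ue uecub0 by linarith
    hence "X * (X * ye^2) \<le> X * 1" using X by (intro mult_left_mono) auto
    hence "(X*ye)^2 \<le> X" by (simp add: power2_eq_square mult.assoc mult.left_commute)
    thus ?thesis using X ye0 by (simp add: real_le_rsqrt)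
  qed
  have sm: "X*d*(2*ye - d) \<le> \<eta>"
  proof -
    have "X*d*(2*ye - d) \<le> X*d*(2*ye)" using X dd by (simp add: mult_left_mono)
    also have "\<dots> = 2 * (X*ye) * d" by simp
    also have "\<dots> \<le> 2 * sqrt X * (1/2^b)" using Xye dd X ye0
      by (intro mult_mono) auto
    also have "\<dots> \<le> \<eta>" using eta by simp
    finally show ?thesis .
  qed
  have sq: "u^2 \<le> c^2 + 3/2 * D"
  proof -
    have "u^2 = u * u" by (simp add: power2_eq_square)
    also have "\<dots> \<le> u * (c + D)" using u_ge ub u_def by (simp add: mult_left_mono)
    also have "\<dots> = u*c + u*D" by (simp add: algebra_simps)
    also have "\<dots> \<le> (c+D)*c + (3/4)*D" using u_ge ub u_def c D
      by (intro add_mono mult_right_mono) auto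
    also have "\<dots> \<le> c^2 + 3/2*D"
    proof -
      have "D*c \<le> D*(3/4)" using c D by (intro mult_left_mono) auto
      thus ?thesis by (simp add: power2_eq_square algebra_simps)
    qed
    finally show ?thesis .
  qed
  have ucub: "u^2*(3+u)/4 \<le> 135/256"
  proof -
    have "u^2 \<le> (3/4)^2" using u_ge by (intro power_mono) auto
    moreover have "3 + u \<le> 15/4" using u_ge by simp
    ultimately have "u^2*(3+u) \<le> (3/4)^2 * (15/4)" using u_ge by (intro mult_mono) auto
    also have "(3/4::real)^2 * (15/4) = 135/64" by (simp add: power2_eq_square)
    finally show ?thesis by linarith
  qed
  show ?thesis unfolding ye_def[symmetric] y'_def[symmetric] u'
    using tb pos sm uecub uecub0 sq ucub eta by (intro conjI) linarith+
qed

lemma y_stage: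
  fixes X \<eta> :: real and b :: nat
  assumes X: "X > 0" and y0: "0 \<le> sqrt_y b X 0"
   and u0: "0 \<le> 1 - X * (sqrt_y b X 0)^2" "1 - X * (sqrt_y b X 0)^2 \<le> 3/4"
   and eta: "2 * sqrt X / 2^b \<le> \<eta>" "\<eta> \<le> 1/8"
  shows "0 \<le> sqrt_y b X j \<and> 0 \<le> 1 - X * (sqrt_y b X j)^2 \<and> 1 - X * (sqrt_y b X j)^2 \<le> 3/4 \<and>
         1 - X * (sqrt_y b X j)^2 \<le> (3/4)^(2^j) + 2 * \<eta> * ((3/2)^j - 1)"
proof (induction j)
  case 0 then show ?case using y0 u0 by simp
next
  case (Suc j)
  have c: "0 \<le> ((3::real)/4)^(2^j)" "((3::real)/4)^(2^j) \<le> 3/4"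
  proof -
    show "0 \<le> ((3::real)/4)^(2^j)" by simp
    have "((3::real)/4)^(2^j) \<le> (3/4)^1" by (rule power_decreasing) auto
    then show "((3::real)/4)^(2^j) \<le> 3/4" by simp
  qed
  have D: "0 \<le> 2 * \<eta> * ((3/2)^j - 1)"
  proof -
    have "0 \<le> \<eta>" using eta X by (smt (verit) divide_nonneg_pos real_sqrt_ge_zero zero_less_power)
    moreover have "(1::real) \<le> (3/2)^j" by simp
    ultimately show ?thesis by simp
  qed
  have "(((3::real)/4)^(2^j))^2 = (3/4)^(2^Suc j)" by (simp add: power_mult[symmetric] mult.commute)
  moreover have "3/2 * (2 * \<eta> * ((3/2)^j - 1)) + \<eta> = 2 * \<eta> * ((3/2)^(Suc j) - 1)"
    by (simp add: algebra_simps)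
  moreover have "0 \<le> sqrt_y b X j" "0 \<le> 1 - X * (sqrt_y b X j)^2" "1 - X * (sqrt_y b X j)^2 \<le> 3/4"
     "1 - X * (sqrt_y b X j)^2 \<le> (3/4)^(2^j) + 2 * \<eta> * ((3/2)^j - 1)" using Suc.IH by auto
  note st = y_step[OF X this c D eta]
  moreover have "sqrt_y b X (Suc j) = trunc_bits b ((3 * sqrt_y b X j - X * (sqrt_y b X j)^3) / 2)" by simp
  ultimately show ?case by (simp only: simp_thms) (elim conjE; linarith)
qed



lemma geo_powi:
  "(\<Sum>j\<in>{a - int n .. a - 1}. (2::real) powi j) = 2 powi a - 2 powi (a - int n)"
proof (induction n)
  case 0 then show ?case by simp
next
  case (Suc n)
  have "{a - int (Suc n) .. a - 1} = insert (a - int (Suc n)) {a - int n .. a - 1}" by auto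
  moreover have "a - int (Suc n) \<notin> {a - int n .. a - 1}" by auto
  ultimately have "(\<Sum>j\<in>{a - int (Suc n) .. a - 1}. (2::real) powi j)
      = 2 powi (a - int (Suc n)) + (\<Sum>j\<in>{a - int n .. a - 1}. (2::real) powi j)" by simp
  also have "\<dots> = 2 powi (a - int (Suc n)) + 2 powi a - 2 powi (a - int n)" using Suc.IH by simp
  also have "2 powi (a - int n) = (2::real) powi (a - int (Suc n)) * 2"
    by (metis power_int_add_1 diff_add_cancel of_nat_Suc diff_diff_eq2 add.commute diff_diff_add zero_neq_numeral)
  finally show ?case by simp
qed

lemma fixed_val_le: "fixed_val n m wb \<le> 2 ^ m"
proof -
  have "fixed_val n m wb \<le> (\<Sum>j\<in>{int m - int n .. int m - 1}. (2::real) powi j)"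
    unfolding fixed_val_def by (intro sum_mono) auto
  also have "\<dots> = 2 powi (int m) - 2 powi (int m - int n)" by (rule geo_powi)
  also have "\<dots> \<le> 2 ^ m" by simp
  finally show ?thesis .
qed

lemma pow15: "(s::nat) \<ge> 3 \<Longrightarrow> (3/2::real)^s \<le> 2^(s-1)"
proof -
  assume "s \<ge> 3"
  then obtain t where t: "s = t + 3" by (metis add.commute le_Suc_ex)
  have "(3/2::real)^t \<le> 2^t" by (intro power_mono) auto
  hence "(3/2::real)^t * (27/8) \<le> 2^t * 4" by (intro mult_mono) auto
  moreover have "(3/2::real)^s = (3/2)^t * (27/8)" "(2::real)^(s-1) = 2^t*4"
    by (simp_all add: t power_add power3_eq_cube)
  ultimately show ?thesis by linarith
qed



lemma sqrt_r_bound: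
  fixes u e :: real
  assumes "0 \<le> u" "u \<le> 3/4" "0 \<le> e" "e \<le> 1/2"
  shows "\<bar>sqrt ((1-u)/(1-e)) - 1\<bar> \<le> u + e"
proof -
  define r where "r = (1-u)/(1-e)"
  have r0: "r \<ge> 0" using assms unfolding r_def by simp
  show ?thesis
  proof (cases "r \<le> 1")
    case True
    have sr: "sqrt r \<le> 1" "0 \<le> sqrt r" using True r0 by auto
    have "(1 - sqrt r) * (1 + sqrt r) = 1 - r" using r0 by (simp add: algebra_simps)
    moreover have "1 - sqrt r \<le> (1 - sqrt r) * (1 + sqrt r)" using sr by (simp add: mult_le_cancel_left1)
    moreover have "1 - r \<le> u"
    proof -
      have "1 - r = (u - e)/(1-e)" unfolding r_def using assms by (simp add: field_simps)
      also have "\<dots> \<le> u" using assms by (simp add: divide_le_eq algebra_simps mult_left_le)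
      finally show ?thesis .
    qed
    ultimately show ?thesis unfolding r_def[symmetric] using assms sr by simp
  next
    case False
    have sr: "sqrt r \<ge> 1" using False by simp
    have "(sqrt r - 1) * (sqrt r + 1) = r - 1" using r0 by (simp add: algebra_simps)
    moreover have "2 * (sqrt r - 1) \<le> (sqrt r - 1) * (sqrt r + 1)" using sr by (intro mult_left_mono[of 2 "sqrt r + 1" "sqrt r - 1", simplified mult.commute]) auto
    moreover have "r - 1 \<le> 2*e"
    proof -
      have "r - 1 = (e - u)/(1-e)" unfolding r_def using assms by (simp add: field_simps)
      also have "\<dots> \<le> e / (1/2)" using assms by (intro frac_le) auto
      finally show ?thesis by simp
    qed
    ultimately show ?thesis unfolding r_def[symmetric] using assms sr by simp
  qed
qed


theorem theorem1:
  fixes n m b :: nat and wb :: "int \<Rightarrow> bool" and w :: real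
  assumes "m \<le> n"
    and "w = fixed_val n m wb"
    and "w > 1"
    and "b \<ge> max (2 * m) 4"
  shows "\<bar>SQRT b w - sqrt w\<bar> \<le> (3/4) ^ (b - 2 * m) * (2 + real b + log 2 (real b))"
proof -
  have w1: "w > 1" by fact
  have wm: "w \<le> 2^m" using assms(2) fixed_val_le by simp
  have m1: "m \<ge> 1"
  proof (rule ccontr)
    assume "\<not> m \<ge> 1" hence "m = 0" by simp
    thus False using wm w1 by simp
  qed
  have b4: "b \<ge> 4" and b2m: "b \<ge> 2*m" using assms(4) by auto
  define k where "k = b - 2*m"
  have bk: "b = k + 2*m" unfolding k_def using b2m by simp
  have p2b: "(2::real)^b = 2^k * 2^m * 2^m" unfolding bk by (simp add: power_add power_mult mult_2)
  have eps: "w / 2^b \<le> 1/4"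
  proof -
    have "m + 2 \<le> b" using b4 b2m m1 by linarith
    hence "(2::real)^(m+2) \<le> 2^b" by (intro power_increasing) auto
    hence "w * 4 \<le> 2^b" using wm by (simp add: power_add)
    thus ?thesis by (simp add: divide_le_eq)
  qed
  define P where "P = (THE p::nat. 2 ^ p > w \<and> w \<ge> 2 powi (int p - 1))"
  have Pprop: "2 ^ P > w \<and> w \<ge> 2 powi (int P - 1)"
  proof -
    obtain k0 where k0: "2 powi k0 \<le> w" "w < 2 powi (k0+1)" using pow2_bracket[of w] w1 by auto
    have k0p: "k0 \<ge> 0"
    proof (rule ccontr)
      assume "\<not> k0 \<ge> 0" hence "k0 + 1 \<le> 0" by simp
      hence "(2::real) powi (k0+1) \<le> 2 powi 0" by (intro power_int_increasing) auto
      thus False using k0 w1 by simp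
    qed
    have ex: "\<exists>!p::nat. 2 ^ p > w \<and> w \<ge> 2 powi (int p - 1)"
    proof (rule ex1I[of _ "nat (k0+1)"])
      show "2 ^ nat (k0+1) > w \<and> w \<ge> 2 powi (int (nat (k0+1)) - 1)"
        using k0 k0p by (simp add: power_int_nonneg_exp[symmetric])
    next
      fix p :: nat assume h: "2 ^ p > w \<and> w \<ge> 2 powi (int p - 1)"
      have "int p - 1 = k0"
        by (rule pow2_bracket_unique[of "int p - 1" w]) (use h k0 in auto)
      thus "p = nat (k0+1)" by simp
    qed
    show ?thesis unfolding P_def by (rule theI'[OF ex])
  qed
  have "sqrt_x b w 0 = 2 powi (- int P)" unfolding P_def by (simp only: sqrt_x.simps)
  hence x0: "sqrt_x b w 0 = 1 / 2^P" by (simp add: power_int_minus_divide)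
  have P2: "(2::real) powi (int P - 1) = 2^P / 2" by (simp add: power_int_diff)
  have e0: "0 \<le> 1 - w * sqrt_x b w 0" "1 - w * sqrt_x b w 0 \<le> 1/2"
    using Pprop unfolding x0 P2 by (auto simp: field_simps)
  define s where "s = sqrt_steps b"
  note xs = x_stage[OF _ eps e0, of s]
  define X where "X = sqrt_x b w s"
  define e where "e = 1 - w * X"
  have e: "0 \<le> e" "e \<le> 1/2" "e \<le> (1/2)^(2^s) + real s * (w/2^b)" using xs w1 unfolding e_def X_def by auto
  have Xe: "X = (1 - e)/w" unfolding e_def using w1 by simp
  have X0: "X > 0" unfolding Xe using e w1 by simp
  have X1: "X < 1" unfolding Xe using e w1 by (simp add: divide_less_eq)
  define Q where "Q = (THE q::nat. 2 powi (1 - int q) > X \<and> X \<ge> 2 powi (- int q))"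
  have Qprop: "2 powi (1 - int Q) > X \<and> X \<ge> 2 powi (- int Q)"
  proof -
    obtain k0 where k0: "2 powi k0 \<le> X" "X < 2 powi (k0+1)" using pow2_bracket[of X] X0 by auto
    have k0p: "k0 < 0"
    proof (rule ccontr)
      assume "\<not> k0 < 0" hence "0 \<le> k0" by simp
      hence "(2::real) powi 0 \<le> 2 powi k0" by (intro power_int_increasing) auto
      thus False using k0 X1 by simp
    qed
    have ex: "\<exists>!q::nat. 2 powi (1 - int q) > X \<and> X \<ge> 2 powi (- int q)"
    proof (rule ex1I[of _ "nat (- k0)"])
      have "int (nat (-k0)) = - k0" using k0p by simp
      thus "2 powi (1 - int (nat (-k0))) > X \<and> X \<ge> 2 powi (- int (nat (-k0)))"
        using k0 by (simp add: add.commute)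
    next
      fix q :: nat assume h: "2 powi (1 - int q) > X \<and> X \<ge> 2 powi (- int q)"
      have hh: "(2::real) powi (- int q + 1) = 2 powi (1 - int q)" by (simp add: algebra_simps)
      have h1: "2 powi (- int q) \<le> X" "X < 2 powi (- int q + 1)" using h unfolding hh by auto
      have "- int q = k0"
        by (rule pow2_bracket_unique[OF h1 k0])
      thus "q = nat (- k0)" by simp
    qed
    show ?thesis unfolding Q_def by (rule theI'[OF ex])
  qed
  define h where "h = (int Q - 1) div 2"
  have y0: "sqrt_y b X 0 = 2 powi h" unfolding h_def Q_def by (simp only: sqrt_y.simps)
  have hb: "2*h \<le> int Q - 1" "int Q - 2 \<le> 2*h" unfolding h_def by linarith+
  have ysq: "(sqrt_y b X 0)^2 = 2 powi (2*h)" unfolding y0 by (simp add: power_int_power' mult.commute)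
  have lo: "X * 2 powi (2*h) \<ge> 1/4"
  proof -
    have "X * 2 powi (2*h) \<ge> 2 powi (- int Q) * 2 powi (2*h)" using Qprop by (intro mult_right_mono) auto
    also have "2 powi (- int Q) * 2 powi (2*h) = (2::real) powi (2*h - int Q)" by (simp add: power_int_add[symmetric])
    also have "(2::real) powi (2*h - int Q) \<ge> 2 powi (-2)" using hb by (intro power_int_increasing) auto
    finally show ?thesis by (simp add: power_int_minus_divide)
  qed
  have hi: "X * 2 powi (2*h) < 1"
  proof -
    have "X * 2 powi (2*h) < 2 powi (1 - int Q) * 2 powi (2*h)" using Qprop by (intro mult_strict_right_mono) auto
    also have "2 powi (1 - int Q) * 2 powi (2*h) = (2::real) powi (2*h + 1 - int Q)" by (simp add: power_int_add[symmetric] algebra_simps)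
    also have "(2::real) powi (2*h + 1 - int Q) \<le> 2 powi 0" using hb by (intro power_int_increasing) auto
    finally show ?thesis by simp
  qed
  have u0: "0 \<le> 1 - X * (sqrt_y b X 0)^2" "1 - X * (sqrt_y b X 0)^2 \<le> 3/4"
    unfolding ysq using lo hi by auto
  define \<eta> where "\<eta> = 2 * sqrt X / 2^b"
  have eta: "2 * sqrt X / 2^b \<le> \<eta>" "\<eta> \<le> 1/8"
  proof -
    show "2 * sqrt X / 2^b \<le> \<eta>" unfolding \<eta>_def by simp
    have "(16::real) \<le> 2^b" using b4 using power_increasing[of 4 b "2::real"] by simp
    moreover have "sqrt X \<le> 1" using X1 by simp
    ultimately have "2 * sqrt X \<le> 2^b / 8" by linarith
    thus "\<eta> \<le> 1/8" unfolding \<eta>_def by (simp add: divide_le_eq)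
  qed
  note ys = y_stage[OF X0 _ u0 eta, of s]
  define y where "y = sqrt_y b X s"
  define u where "u = 1 - X * y^2"
  have u: "0 \<le> y" "0 \<le> u" "u \<le> 3/4" "u \<le> (3/4)^(2^s) + 2 * \<eta> * ((3/2)^s - 1)"
    using ys y0 unfolding u_def y_def by auto
  have SQ: "SQRT b w = y" unfolding SQRT_def y_def X_def s_def using w1 by (simp add: Let_def)
  have yr: "y = sqrt w * sqrt ((1-u)/(1-e))"
  proof -
    have "X * y^2 = 1 - u" unfolding u_def by simp
    hence "y^2 = (1-u)/X" using X0 by (simp add: field_simps)
    also have "\<dots> = w * ((1-u)/(1-e))" unfolding Xe using e w1 by (simp add: field_simps)
    finally have "sqrt (w * ((1-u)/(1-e))) = y" using u(1) by (intro real_sqrt_unique) auto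
    hence "y = sqrt (w * ((1-u)/(1-e)))" by simp
    thus ?thesis using real_sqrt_mult[of w "(1-u)/(1-e)"] by simp
  qed
  have err: "\<bar>SQRT b w - sqrt w\<bar> \<le> sqrt w * (u + e)"
  proof -
    have "SQRT b w - sqrt w = sqrt w * (sqrt ((1-u)/(1-e)) - 1)" unfolding SQ yr by (simp add: algebra_simps)
    hence "\<bar>SQRT b w - sqrt w\<bar> = sqrt w * \<bar>sqrt ((1-u)/(1-e)) - 1\<bar>" using w1 by (simp add: abs_mult)
    also have "\<dots> \<le> sqrt w * (u + e)" using sqrt_r_bound[OF u(2,3) e(1,2)] using w1 by (intro mult_left_mono) auto
    finally show ?thesis .
  qed
  define L where "L = log 2 (real b)"
  have L2: "L \<ge> 2"
  proof -
    have "log 2 (4::real) \<le> L" unfolding L_def using b4 by (subst log_le_cancel_iff) auto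
    moreover have "log 2 (4::real) = 2" by (simp add: log_def ln_realpow[of 2 2, simplified])
    ultimately show ?thesis by simp
  qed
  have sL: "real s \<ge> L" "real s < L + 1"
    unfolding s_def sqrt_steps_def L_def[symmetric] using L2 by linarith+
  have s2: "s \<ge> 2" using sL L2 by linarith
  have bs: "b \<le> 2^s"
  proof -
    have "real b = 2 powr L" unfolding L_def using b4 by simp
    also have "\<dots> \<le> 2 powr (real s)" using sL by (intro powr_mono) auto
    also have "\<dots> = 2^s" by (simp add: powr_realpow)
    finally have "real b \<le> real (2^s)" by simp
    thus ?thesis by (simp only: of_nat_le_iff)
  qed
  have key: "(3/2::real)^s + real s \<le> real b + L"
  proof (cases "s \<le> 2")
    case True
    hence "s = 2" using s2 by simp
    moreover have "(3/2::real)^2 = 9/4" by (simp add: power2_eq_square)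
    moreover have "(4::real) \<le> real b" using b4 by simp
    ultimately show ?thesis using L2 by simp
  next
    case False
    hence s3: "s \<ge> 3" by simp
    have "2 powr (real s - 1) < 2 powr L" using sL by (intro powr_less_mono) auto
    moreover have "2 powr (real s - 1) = 2^(s-1)" using s3 by (simp add: powr_realpow[symmetric] of_nat_diff)
    moreover have "2 powr L = real b" unfolding L_def using b4 by simp
    ultimately have "real (2^(s-1)) < real b" by simp
    hence "2^(s-1) < b" by (simp only: of_nat_less_iff)
    hence "2^(s-1) + 1 \<le> b" by simp
    hence "real (2^(s-1) + 1) \<le> real b" by (simp only: of_nat_le_iff)
    hence "(2::real)^(s-1) + 1 \<le> real b" by simp
    moreover have "(3/2::real)^s \<le> 2^(s-1)" using pow15 s3 by simp
    ultimately show ?thesis using sL by linarith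
  qed
  have pw1: "((1::real)/2)^(2^s) \<le> (1/2)^b" by (rule power_decreasing[OF bs]) auto
  have pw2: "((3::real)/4)^(2^s) \<le> (3/4)^b" by (rule power_decreasing[OF bs]) auto
  have eta0: "0 \<le> \<eta>" unfolding \<eta>_def using X0 by simp
  have weta: "sqrt w * \<eta> \<le> 2 / 2^b"
  proof -
    have "sqrt w * sqrt X = sqrt (1 - e)" unfolding real_sqrt_mult[symmetric] e_def using w1 by simp
    also have "\<dots> \<le> 1" using e by simp
    finally have "sqrt w * sqrt X \<le> 1" .
    thus ?thesis unfolding \<eta>_def by (simp add: divide_le_eq)
  qed
  define H where "H = ((1::real)/2)^k"
  define A where "A = ((3::real)/4)^k"
  have HA: "H \<le> A" unfolding H_def A_def by (intro power_mono) auto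
  have H0: "0 \<le> H" unfolding H_def by simp
  have inv2b: "1 / (2::real)^b = H / (2^m * 2^m)" unfolding p2b H_def by (simp add: power_one_over)
  have sqw: "sqrt w \<le> w" using w1 by (intro real_le_lsqrt) (auto simp: power2_eq_square)
  have sqw0: "0 \<le> sqrt w" using w1 by simp
  have m4: "(4::real) \<le> 2^m * 2^m"
  proof -
    have "(2::real) \<le> 2^m" using m1 using power_increasing[of 1 m "2::real"] by simp
    thus ?thesis using mult_mono[of 2 "2^m" 2 "2^m::real"] by simp
  qed
  have T1: "sqrt w * (3/4)^b \<le> A"
  proof -
    have "sqrt w \<le> ((16::real)/9)^m"
    proof (rule real_le_lsqrt)
      show "0 \<le> ((16::real)/9)^m" by simp
      have "(2::real)^m \<le> (256/81)^m" by (intro power_mono) auto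
      also have "\<dots> = (((16::real)/9)^2)^m" by (simp add: power2_eq_square)
      also have "\<dots> = (((16::real)/9)^m)^2" by (metis power_mult mult.commute)
      finally show "w \<le> (((16::real)/9)^m)^2" using wm by linarith
    qed
    hence "sqrt w * (3/4)^b \<le> (16/9)^m * (3/4)^b" by (intro mult_right_mono) auto
    moreover have "(3/4::real)^b = A * ((3/4)^2)^m" unfolding bk A_def by (simp only: power_add power_mult)
    moreover have "((3/4::real)^2) = 9/16" by (simp add: power2_eq_square)
    moreover have "(16/9::real)^m * (A * (9/16)^m) = A * ((16/9)*(9/16))^m" by (simp only: power_mult_distrib mult_ac)
    ultimately show ?thesis by simp
  qed
  have T2: "4 * (3/2)^s / 2^b \<le> (3/2)^s * A"
  proof -
    have "4 * (3/2::real)^s / 2^b = (3/2)^s * (4 * (1 / 2^b))" by simp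
    also have "4 * (1 / (2::real)^b) \<le> H" unfolding inv2b using H0 m4 by (simp add: divide_le_eq mult_left_mono mult.commute)
    hence "(3/2::real)^s * (4 * (1 / 2^b)) \<le> (3/2)^s * A" using HA by (intro mult_left_mono) auto
    finally show ?thesis .
  qed
  have T3: "sqrt w * (1/2)^b \<le> A"
  proof -
    have "sqrt w * (1/2)^b \<le> 2^m * (1 / 2^b)" using sqw wm by (intro mult_mono) (auto simp: power_one_over)
    also have "\<dots> = H / 2^m" unfolding inv2b by simp
    also have "\<dots> \<le> H" using H0 by (simp add: divide_le_eq mult_le_cancel_left1)
    finally show ?thesis using HA by linarith
  qed
  have T4: "real s * w * sqrt w / 2^b \<le> real s * A"
  proof -
    have "w * sqrt w \<le> 2^m * 2^m" using sqw wm w1 by (intro mult_mono) auto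
    hence "w * sqrt w * (1/2^b) \<le> 2^m * 2^m * (1/2^b)" by (intro mult_right_mono) auto
    also have "\<dots> = H" unfolding inv2b by simp
    finally have "w * sqrt w / 2^b \<le> A" using HA by simp
    hence "real s * (w * sqrt w / 2^b) \<le> real s * A" by (intro mult_left_mono) auto
    thus ?thesis by simp
  qed
  have "sqrt w * (u + e) \<le> sqrt w * ((3/4)^b + 2 * \<eta> * ((3/2)^s - 1) + ((1/2)^b + real s * (w/2^b)))"
  proof -
    have "u + e \<le> (3/4)^b + 2 * \<eta> * ((3/2)^s - 1) + ((1/2)^b + real s * (w/2^b))"
      using u(4) e(3) pw1 pw2 by linarith
    thus ?thesis using sqw0 by (rule mult_left_mono)
  qed
  also have "\<dots> = sqrt w * (3/4)^b + 2 * (sqrt w * \<eta>) * ((3/2)^s - 1) + sqrt w * (1/2)^b + real s * w * sqrt w / 2^b"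
    by (simp add: algebra_simps)
  also have "2 * (sqrt w * \<eta>) * ((3/2)^s - 1) \<le> 2 * (2 / 2^b) * ((3/2)^s - 1)"
    using weta by (intro mult_right_mono mult_left_mono) auto
  also have "2 * (2 / 2^b) * ((3/2::real)^s - 1) \<le> 4 * (3/2)^s / 2^b" by (simp add: field_simps)
  finally have "sqrt w * (u + e) \<le> A + (3/2)^s * A + A + real s * A" using T1 T2 T3 T4 by linarith
  also have "\<dots> = A * (2 + (3/2)^s + real s)" by (simp add: algebra_simps)
  also have "\<dots> \<le> A * (2 + real b + L)" using key unfolding A_def by (intro mult_left_mono) auto
  finally show ?thesis using err unfolding A_def L_def k_def by linarith
qed


end
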